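(* Consider the combined heat and power network described in the context, operating in Mode 1, after a step change in the electrical load $p^L$. At an equilibrium, the generation deviations $p^G$, the heat pump powers $p^P=(p^P_j)_{j\in H_e}$ and $p^U=(D_j\omega_j)_{j\in N_e}$ form a solution of $$\min_{p^G,p^P,p^U}\ \tfrac12(p^G)^TQ_ep^G+\tfrac12(p^P)^TQ_pp^P+\tfrac12(p^U)^TQ_up^U\quad\text{s.t.}\quad \mathbf 1^Tp^G=\mathbf 1^Tp^L+\mathbf 1^Tp^P+\mathbf 1^Tp^U,$$ where $Q_e=\mathrm{diag}(Q_{e,jj})_{j\in N_e^G}$, $Q_p=\mathrm{diag}(1/a_{1,j})_{j\in H_e}$, $Q_u=\mathrm{diag}(1/D_j)_{j\in N_e}$. Moreover, given the heat pump power consumption $\bar p^P$ in this solution (so that $h^P_{j_k}=C_o\bar p^P_{i_k}$, $k\in H$), the equilibrium deviations $h^G=(h^G_j)_{j\in E_h^G}$ of the conventional heat sources form the solution of $$\min_{h^G}\ \tfrac12(h^G)^TQ_hh^G\quad\text{s.t.}\quad \mathbf 1^Th^G=\mathbf 1^T(h^L-h^P),$$ where $Q_h=\mathrm{diag}(Q_{h,jj})_{j\in E_h^G}$.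
   Context: Power network: a directed graph $(N_e,E_e)$ with buses $N_e$ and lines $E_e$, arbitrarily oriented. $N_e^G\subseteq N_e$ is the set of generator buses and $H_e\subseteq N_e$ the set of buses to which heat pumps are connected. Heat network: a directed graph $(N_h,E_h)$, each edge $j$ oriented along its mass flow with inlet node $s(j)$ and outlet node $t(j)$; among the edges are heat-pump edges $H_h$, conventional heat source edges $E_h^G$ and heat-load edges $E_h^L$. Heat pumps are indexed by a finite set $H$; heat pump $k\in H$ is connected to bus $i_k\in H_e$ and corresponds to edge $j_k\in H_h$. Lines: for $(i,j)\in E_e$, $\dot\eta_{ij}=\omega_i-\omega_j$, $p_{ij}=B_{ij}\sin(\eta_{ij})-p^{\mathrm{nom}}_{ij}$, $B_{ij}>0$. Every bus $j\in N_e$: $M_j\dot\omega_j=-p^L_j-p^P_j+p^G_j-p^U_j+\sum_{i:(i,j)\in E_e}p_{ij}-\sum_{k:(j,k)\in E_e}p_{jk}$, with $M_j>0$, $p^U_j=D_j\omega_j$, $D_j>0$, $p^L_j$ constant, $p^G_j=0$ for $j\notin N_e^G$, $p^P_j=0$ for $j\notin H_e$. Heat network ($\rho C_p=1$), constant positive mass flows $q^E_j$, volumes $V^E_j,V^N_k>0$: $V^E_j\dot T^E_j=q^E_j(T^N_{s(j)}-T^E_j)+h^G_j+h^P_j-h^L_j$ for each edge $j$, $V^N_k\dot T^N_k=\sum_{j:t(j)=k}q^E_j(T^E_j-T^N_k)$ for each node $k$, where $h^G_j=0$ unless $j\in E_h^G$, $h^P_j=0$ unless $j\in H_h$, $h^L_j=0$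 unless $j\in E_h^L$, $h^L_j$ constant. In matrix form $V\dot T=-A_hT+\mathrm{col}(h^G+h^P-h^L,\mathbf 0)$ with $T=\mathrm{col}(T^E,T^N)$, $V=\mathrm{diag}(V^E,V^N)$, where $A_h\mathbf 1=0$, $\mathbf 1^TA_h=0$ and $A_h+A_h^T$ is positive semidefinite with a simple zero eigenvalue. Average temperature $\bar T=\mathbf 1^TVT/(\mathbf 1^TV\mathbf 1)$. Generation control: $\dot p^G_j=-p^G_j-\frac{1}{Q_{e,jj}}\omega_j$ ($j\in N_e^G$), $\dot h^G_j=-h^G_j-\frac{1}{Q_{h,jj}}\bar T$ ($j\in E_h^G$), with $Q_{e,jj},Q_{h,jj}>0$. Heat pump: $h^P_{j_k}=C_op^P_{i_k}$, $k\in H$, constant $C_o$. Mode 1: $p^P_j=a_{1,j}\omega_j$ for $j\in H_e$, constants $a_{1,j}>0$. *)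

theory Defs
  imports Complex_Main
begin

definition line_flow :: "('b \<Rightarrow> 'b \<Rightarrow> real) \<Rightarrow> ('b \<Rightarrow> 'b \<Rightarrow> real) \<Rightarrow> ('b \<Rightarrow> 'b \<Rightarrow> real) \<Rightarrow> 'b \<Rightarrow> 'b \<Rightarrow> real"
  where "line_flow B pnom eta i j = B i j * sin (eta i j) - pnom i j"

text \<open>Index set of the heat state T = col(T^E, T^N): edges (Inl) and nodes (Inr).\<close>
definition heat_idx :: "'e set \<Rightarrow> 'n set \<Rightarrow> ('e + 'n) set"
  where "heat_idx Eh Nh = Eh <+> Nh"

text \<open>The matrix A_h applied to a vector T, read off from the component equations
  V^E_j dT^E_j = q_j (T^N_{s j} - T^E_j) + ...,  V^N_k dT^N_k = sum_{t j = k} q_j (T^E_j - T^N_k),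
  i.e. V dT = - A_h T + col(h^G + h^P - h^L, 0).\<close>
definition heat_Ah :: "'e set \<Rightarrow> ('e \<Rightarrow> real) \<Rightarrow> ('e \<Rightarrow> 'n) \<Rightarrow> ('e \<Rightarrow> 'n) \<Rightarrow> ('e + 'n \<Rightarrow> real) \<Rightarrow> ('e + 'n \<Rightarrow> real)"
  where "heat_Ah Eh q s t T = (\<lambda>x. case x of
            Inl j \<Rightarrow> q j * (T (Inl j) - T (Inr (s j)))
          | Inr k \<Rightarrow> (\<Sum>j\<in>{j\<in>Eh. t j = k}. q j * (T (Inr k) - T (Inl j))))"

definition avg_temp :: "'e set \<Rightarrow> 'n set \<Rightarrow> ('e \<Rightarrow> real) \<Rightarrow> ('n \<Rightarrow> real) \<Rightarrow> ('e \<Rightarrow> real) \<Rightarrow> ('n \<Rightarrow> real) \<Rightarrow> real"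
  where "avg_temp Eh Nh VE VN TE TN =
     ((\<Sum>j\<in>Eh. VE j * TE j) + (\<Sum>k\<in>Nh. VN k * TN k)) / ((\<Sum>j\<in>Eh. VE j) + (\<Sum>k\<in>Nh. VN k))"

definition power_cost :: "'b set \<Rightarrow> 'b set \<Rightarrow> 'b set \<Rightarrow> ('b \<Rightarrow> real) \<Rightarrow> ('b \<Rightarrow> real) \<Rightarrow> ('b \<Rightarrow> real)
     \<Rightarrow> ('b \<Rightarrow> real) \<Rightarrow> ('b \<Rightarrow> real) \<Rightarrow> ('b \<Rightarrow> real) \<Rightarrow> real"
  where "power_cost Ne NeG He Qe a1 D pG pP pU =
     1/2 * (\<Sum>j\<in>NeG. Qe j * (pG j)\<^sup>2) + 1/2 * (\<Sum>j\<in>He. (1 / a1 j) * (pP j)\<^sup>2)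
     + 1/2 * (\<Sum>j\<in>Ne. (1 / D j) * (pU j)\<^sup>2)"

definition power_feasible :: "'b set \<Rightarrow> 'b set \<Rightarrow> 'b set \<Rightarrow> ('b \<Rightarrow> real) \<Rightarrow> ('b \<Rightarrow> real) \<Rightarrow> ('b \<Rightarrow> real) \<Rightarrow> ('b \<Rightarrow> real) \<Rightarrow> bool"
  where "power_feasible Ne NeG He pL pG pP pU \<longleftrightarrow>
     (\<Sum>j\<in>NeG. pG j) = (\<Sum>j\<in>Ne. pL j) + (\<Sum>j\<in>He. pP j) + (\<Sum>j\<in>Ne. pU j)"

definition heat_cost :: "'e set \<Rightarrow> ('e \<Rightarrow> real) \<Rightarrow> ('e \<Rightarrow> real) \<Rightarrow> real"
  where "heat_cost EhG Qh hG = 1/2 * (\<Sum>j\<in>EhG. Qh j * (hG j)\<^sup>2)"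

text \<open>Constraint 1^T h^G = 1^T (h^L - h^P) (h^L, h^P vanish outside E_h^L, H_h).\<close>
definition heat_feasible :: "'e set \<Rightarrow> 'e set \<Rightarrow> ('e \<Rightarrow> real) \<Rightarrow> ('e \<Rightarrow> real) \<Rightarrow> ('e \<Rightarrow> real) \<Rightarrow> bool"
  where "heat_feasible Eh EhG hL hP hG \<longleftrightarrow> (\<Sum>j\<in>EhG. hG j) = (\<Sum>j\<in>Eh. hL j - hP j)"

end

theory Submission
  imports Defs
begin


lemma cvx_sum:
  assumes "finite A" "\<forall>j\<in>A. (c::'a\<Rightarrow>real) j > 0"
  shows "1/2 * (\<Sum>j\<in>A. c j * (x j)\<^sup>2) + (\<Sum>j\<in>A. c j * x j * (y j - x j)) \<le> 1/2 * (\<Sum>j\<in>A. c j * (y j)\<^sup>2)"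
proof -
  have "\<forall>j\<in>A. c j * (x j)\<^sup>2 + 2 * (c j * x j * (y j - x j)) \<le> c j * (y j)\<^sup>2"
  proof
    fix j assume "j \<in> A"
    then have "c j > 0" using assms by auto
    then have "0 \<le> c j * (y j - x j)\<^sup>2" by simp
    then show "c j * (x j)\<^sup>2 + 2 * (c j * x j * (y j - x j)) \<le> c j * (y j)\<^sup>2"
      by (simp add: power2_eq_square algebra_simps)
  qed
  then have "(\<Sum>j\<in>A. c j * (x j)\<^sup>2 + 2 * (c j * x j * (y j - x j))) \<le> (\<Sum>j\<in>A. c j * (y j)\<^sup>2)"
    by (intro sum_mono) auto
  then show ?thesis by (simp add: sum.distrib sum_distrib_left[symmetric])
qed

lemma grad_const:
  assumes "\<forall>j\<in>A. (c::'a\<Rightarrow>real) j * x j = w"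
  shows "(\<Sum>j\<in>A. c j * x j * (y j - x j)) = w * ((\<Sum>j\<in>A. y j) - (\<Sum>j\<in>A. x j))"
proof -
  have "(\<Sum>j\<in>A. c j * x j * (y j - x j)) = (\<Sum>j\<in>A. w * (y j - x j))"
    using assms by (intro sum.cong) auto
  then show ?thesis by (simp add: sum_distrib_left[symmetric] sum_subtractf)
qed

theorem proposition1:
  fixes Ne NeG He :: "'b set" and Ee :: "('b \<times> 'b) set"
    and B pnom eta :: "'b \<Rightarrow> 'b \<Rightarrow> real"
    and M D Qe a1 pL :: "'b \<Rightarrow> real"
    and Nh :: "'n set" and Eh Hh EhG EhL :: "'e set" and s t :: "'e \<Rightarrow> 'n"
    and q VE Qh hL :: "'e \<Rightarrow> real" and VN :: "'n \<Rightarrow> real"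
    and H :: "'k set" and ib :: "'k \<Rightarrow> 'b" and je :: "'k \<Rightarrow> 'e" and Co :: real
    and \<omega> pG pP pU :: "'b \<Rightarrow> real"
    and TE hG hP :: "'e \<Rightarrow> real" and TN :: "'n \<Rightarrow> real"
  assumes
    \<comment> \<open>power network\<close>
    fin_Ne: "finite Ne" and Ee_sub: "Ee \<subseteq> Ne \<times> Ne"
    and NeG_sub: "NeG \<subseteq> Ne" and He_sub: "He \<subseteq> Ne"
    and B_pos: "\<forall>(i,j)\<in>Ee. B i j > 0"
    and M_pos: "\<forall>j\<in>Ne. M j > 0" and D_pos: "\<forall>j\<in>Ne. D j > 0"
    and Qe_pos: "\<forall>j\<in>NeG. Qe j > 0" and a1_pos: "\<forall>j\<in>He. a1 j > 0"
    and connected: "\<forall>i\<in>Ne. \<forall>j\<in>Ne. (i, j) \<in> (Ee \<union> Ee\<inverse>)\<^sup>*"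
    \<comment> \<open>heat network\<close>
    and fin_Nh: "finite Nh" and fin_Eh: "finite Eh"
    and st_in: "\<forall>j\<in>Eh. s j \<in> Nh \<and> t j \<in> Nh"
    and Hh_sub: "Hh \<subseteq> Eh" and EhG_sub: "EhG \<subseteq> Eh" and EhL_sub: "EhL \<subseteq> Eh"
    and q_pos: "\<forall>j\<in>Eh. q j > 0" and VE_pos: "\<forall>j\<in>Eh. VE j > 0" and VN_pos: "\<forall>k\<in>Nh. VN k > 0"
    and Qh_pos: "\<forall>j\<in>EhG. Qh j > 0"
    and Ah_one: "\<forall>x\<in>heat_idx Eh Nh. heat_Ah Eh q s t (\<lambda>_. 1) x = 0"
    and one_Ah: "\<forall>T. (\<Sum>x\<in>heat_idx Eh Nh. heat_Ah Eh q s t T x) = 0"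
    and Ah_psd: "\<forall>T. (\<Sum>x\<in>heat_idx Eh Nh. T x * heat_Ah Eh q s t T x) \<ge> 0"
    and Ah_simple_zero: "\<forall>T. (\<Sum>x\<in>heat_idx Eh Nh. T x * heat_Ah Eh q s t T x) = 0
                              \<longrightarrow> (\<exists>c. \<forall>x\<in>heat_idx Eh Nh. T x = c)"
    \<comment> \<open>heat pumps\<close>
    and fin_H: "finite H" and ib_He: "ib ` H = He" and je_Hh: "bij_betw je H Hh"
    \<comment> \<open>equilibrium of the closed loop in Mode 1 (all time derivatives vanish)\<close>
    and eq_line: "\<forall>(i,j)\<in>Ee. \<omega> i - \<omega> j = 0"
    and eq_bus: "\<forall>j\<in>Ne. 0 = - pL j - pP j + pG j - pU j
                 + (\<Sum>i\<in>{i. (i,j) \<in> Ee}. line_flow B pnom eta i j)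
                 - (\<Sum>k\<in>{k. (j,k) \<in> Ee}. line_flow B pnom eta j k)"
    and pU_def: "\<forall>j\<in>Ne. pU j = D j * \<omega> j"
    and eq_gen: "\<forall>j\<in>NeG. 0 = - pG j - (1 / Qe j) * \<omega> j"
    and pG_zero: "\<forall>j\<in>Ne - NeG. pG j = 0"
    and mode1: "\<forall>j\<in>He. pP j = a1 j * \<omega> j"
    and pP_zero: "\<forall>j\<in>Ne - He. pP j = 0"
    and eq_edge: "\<forall>j\<in>Eh. 0 = q j * (TN (s j) - TE j) + hG j + hP j - hL j"
    and eq_node: "\<forall>k\<in>Nh. 0 = (\<Sum>j\<in>{j\<in>Eh. t j = k}. q j * (TE j - TN k))"
    and eq_hgen: "\<forall>j\<in>EhG. 0 = - hG j - (1 / Qh j) * avg_temp Eh Nh VE VN TE TN"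
    and hG_zero: "\<forall>j\<in>Eh - EhG. hG j = 0"
    and hP_pump: "\<forall>k\<in>H. hP (je k) = Co * pP (ib k)"
    and hP_zero: "\<forall>j\<in>Eh - Hh. hP j = 0"
    and hL_zero: "\<forall>j\<in>Eh - EhL. hL j = 0"
  shows
    "(power_feasible Ne NeG He pL pG pP pU
      \<and> (\<forall>g p u. power_feasible Ne NeG He pL g p u \<longrightarrow>
            power_cost Ne NeG He Qe a1 D pG pP pU \<le> power_cost Ne NeG He Qe a1 D g p u))
     \<and> (heat_feasible Eh EhG hL hP hG
      \<and> (\<forall>g. heat_feasible Eh EhG hL hP g \<longrightarrow> heat_cost EhG Qh hG \<le> heat_cost EhG Qh g))"
  proof -
  have finEe: "finite Ee" using Ee_sub fin_Ne by (meson finite_SigmaI finite_subset)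
  have finNeG: "finite NeG" using NeG_sub fin_Ne finite_subset by blast
  have finHe: "finite He" using He_sub fin_Ne finite_subset by blast
  have finEhG: "finite EhG" using EhG_sub fin_Eh finite_subset by blast
  have omc: "\<omega> i = \<omega> j" if "(i, j) \<in> (Ee \<union> Ee\<inverse>)\<^sup>*" for i j
    using that
  proof (induction rule: rtrancl_induct)
    case base then show ?case by simp
  next
    case (step y z) then show ?case using eq_line by auto
  qed
  define w where "w = (if Ne = {} then 0 else \<omega> (SOME j. j \<in> Ne))"
  have omw: "\<omega> j = w" if "j \<in> Ne" for j
  proof -
    have ne: "Ne \<noteq> {}" using that by auto
    have "(SOME j. j \<in> Ne) \<in> Ne" using that by (rule someI)
    then show ?thesis using omc connected that ne unfolding w_def by metis
  qed
  let ?f = "line_flow B pnom eta"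
  have in_sum: "(\<Sum>j\<in>Ne. \<Sum>i\<in>{i. (i,j) \<in> Ee}. ?f i j) = (\<Sum>j\<in>Ne. \<Sum>i\<in>Ne. if (i,j) \<in> Ee then ?f i j else 0)"
  proof (rule sum.cong[OF refl])
    fix j assume "j \<in> Ne"
    have "{i. (i,j) \<in> Ee} = {i\<in>Ne. (i,j) \<in> Ee}" using Ee_sub by auto
    then show "(\<Sum>i\<in>{i. (i,j) \<in> Ee}. ?f i j) = (\<Sum>i\<in>Ne. if (i,j) \<in> Ee then ?f i j else 0)"
      using sum.inter_filter[OF fin_Ne] by simp
  qed
  have out_sum: "(\<Sum>j\<in>Ne. \<Sum>k\<in>{k. (j,k) \<in> Ee}. ?f j k) = (\<Sum>j\<in>Ne. \<Sum>k\<in>Ne. if (j,k) \<in> Ee then ?f j k else 0)"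
  proof (rule sum.cong[OF refl])
    fix j assume "j \<in> Ne"
    have "{k. (j,k) \<in> Ee} = {k\<in>Ne. (j,k) \<in> Ee}" using Ee_sub by auto
    then show "(\<Sum>k\<in>{k. (j,k) \<in> Ee}. ?f j k) = (\<Sum>k\<in>Ne. if (j,k) \<in> Ee then ?f j k else 0)"
      using sum.inter_filter[OF fin_Ne] by simp
  qed
  have flows0: "(\<Sum>j\<in>Ne. (\<Sum>i\<in>{i. (i,j) \<in> Ee}. ?f i j) - (\<Sum>k\<in>{k. (j,k) \<in> Ee}. ?f j k)) = 0"
    unfolding sum_subtractf in_sum out_sum using sum.swap by simp
  have "(\<Sum>j\<in>Ne. - pL j - pP j + pG j - pU j
                 + ((\<Sum>i\<in>{i. (i,j) \<in> Ee}. ?f i j) - (\<Sum>k\<in>{k. (j,k) \<in> Ee}. ?f j k))) = 0"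
    using eq_bus by (intro sum.neutral) auto
  then have bal: "- (\<Sum>j\<in>Ne. pL j) - (\<Sum>j\<in>Ne. pP j) + (\<Sum>j\<in>Ne. pG j) - (\<Sum>j\<in>Ne. pU j) = 0"
    using flows0 by (simp add: sum.distrib sum_subtractf sum_negf)
  have sG: "(\<Sum>j\<in>Ne. pG j) = (\<Sum>j\<in>NeG. pG j)"
    using sum.mono_neutral_right[OF fin_Ne NeG_sub] pG_zero by auto
  have sP: "(\<Sum>j\<in>Ne. pP j) = (\<Sum>j\<in>He. pP j)"
    using sum.mono_neutral_right[OF fin_Ne He_sub] pP_zero by auto
  have pfeas: "power_feasible Ne NeG He pL pG pP pU"
    unfolding power_feasible_def using bal sG sP by linarith
  have popt: "power_cost Ne NeG He Qe a1 D pG pP pU \<le> power_cost Ne NeG He Qe a1 D g p u"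
    if fe: "power_feasible Ne NeG He pL g p u" for g p u
  proof -
    have g1: "\<forall>j\<in>NeG. Qe j * pG j = - w"
    proof
      fix j assume j: "j \<in> NeG"
      then have "Qe j > 0" "\<omega> j = w" using Qe_pos omw NeG_sub by auto
      moreover have "pG j = - (1 / Qe j) * \<omega> j" using eq_gen j by auto
      ultimately show "Qe j * pG j = - w" by simp
    qed
    have g2: "\<forall>j\<in>He. (1 / a1 j) * pP j = w"
      using mode1 a1_pos omw He_sub by auto
    have g3: "\<forall>j\<in>Ne. (1 / D j) * pU j = w"
      using pU_def D_pos omw by auto
    have h2: "\<forall>j\<in>He. 1 / a1 j > 0" using a1_pos by auto
    have h3: "\<forall>j\<in>Ne. 1 / D j > 0" using D_pos by auto
    note c1 = cvx_sum[OF finNeG Qe_pos, of pG g]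
    note c2 = cvx_sum[OF finHe h2, of pP p]
    note c3 = cvx_sum[OF fin_Ne h3, of pU u]
    note d1 = grad_const[OF g1, of g]
    note d2 = grad_const[OF g2, of p]
    note d3 = grad_const[OF g3, of u]
    have "- w * ((\<Sum>j\<in>NeG. g j) - (\<Sum>j\<in>NeG. pG j)) + w * ((\<Sum>j\<in>He. p j) - (\<Sum>j\<in>He. pP j))
          + w * ((\<Sum>j\<in>Ne. u j) - (\<Sum>j\<in>Ne. pU j)) = 0"
      using fe pfeas unfolding power_feasible_def by (simp add: algebra_simps)
    then show ?thesis unfolding power_cost_def using c1 c2 c3 d1 d2 d3 by linarith
  qed
  define T where "T = (\<lambda>x. case x of Inl j \<Rightarrow> TE j | Inr k \<Rightarrow> TN k)"
  have "(\<Sum>x\<in>heat_idx Eh Nh. heat_Ah Eh q s t T x) = 0" using one_Ah by blast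
  then have A0: "(\<Sum>j\<in>Eh. q j * (TE j - TN (s j))) + (\<Sum>k\<in>Nh. \<Sum>j\<in>{j\<in>Eh. t j = k}. q j * (TN k - TE j)) = 0"
    unfolding heat_idx_def sum.Plus[OF fin_Eh fin_Nh] by (simp add: heat_Ah_def T_def o_def)
  have "(\<Sum>k\<in>Nh. \<Sum>j\<in>{j\<in>Eh. t j = k}. q j * (TN k - TE j)) = (\<Sum>k\<in>Nh. - (\<Sum>j\<in>{j\<in>Eh. t j = k}. q j * (TE j - TN k)))"
    by (intro sum.cong refl) (simp add: sum_negf[symmetric] algebra_simps)
  also have "\<dots> = 0" using eq_node by (intro sum.neutral) auto
  finally have A2: "(\<Sum>j\<in>Eh. q j * (TE j - TN (s j))) = 0" using A0 by simp
  have "(\<Sum>j\<in>Eh. q j * (TN (s j) - TE j)) = - (\<Sum>j\<in>Eh. q j * (TE j - TN (s j)))"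
    by (simp add: sum_negf[symmetric] algebra_simps)
  then have A1: "(\<Sum>j\<in>Eh. q j * (TN (s j) - TE j)) = 0" using A2 by simp
  have "(\<Sum>j\<in>Eh. q j * (TN (s j) - TE j) + hG j + hP j - hL j) = 0"
    using eq_edge by (intro sum.neutral) auto
  then have hb: "(\<Sum>j\<in>Eh. q j * (TN (s j) - TE j)) + (\<Sum>j\<in>Eh. hG j) + (\<Sum>j\<in>Eh. hP j) - (\<Sum>j\<in>Eh. hL j) = 0"
    by (simp add: sum.distrib sum_subtractf)
  have sHG: "(\<Sum>j\<in>Eh. hG j) = (\<Sum>j\<in>EhG. hG j)"
    using sum.mono_neutral_right[OF fin_Eh EhG_sub] hG_zero by auto
  have hfeas: "heat_feasible Eh EhG hL hP hG"
    unfolding heat_feasible_def sum_subtractf using hb A1 sHG by linarith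
  have hopt: "heat_cost EhG Qh hG \<le> heat_cost EhG Qh g" if fe: "heat_feasible Eh EhG hL hP g" for g
  proof -
    have g1: "\<forall>j\<in>EhG. Qh j * hG j = - avg_temp Eh Nh VE VN TE TN"
    proof
      fix j assume j: "j \<in> EhG"
      then have "Qh j > 0" using Qh_pos by auto
      moreover have "hG j = - (1 / Qh j) * avg_temp Eh Nh VE VN TE TN" using eq_hgen j by auto
      ultimately show "Qh j * hG j = - avg_temp Eh Nh VE VN TE TN" by simp
    qed
    note c1 = cvx_sum[OF finEhG Qh_pos, of hG g]
    note d1 = grad_const[OF g1, of g]
    have "(\<Sum>j\<in>EhG. g j) = (\<Sum>j\<in>EhG. hG j)" using fe hfeas unfolding heat_feasible_def by simp
    then show ?thesis unfolding heat_cost_def using c1 d1 by simp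
  qed
  show ?thesis using pfeas popt hfeas hopt by blast
qed
end
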